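(* Let $(X,\mathcal{B},\mu,G)$ be a measure-preserving system and $S\subset G$. Then the map $\mathfrak{P}\to[0,\infty)$, $\alpha\mapsto h^*_{\mu,S}(\alpha)$, is continuous with respect to the Rokhlin metric $\rho$. In particular, $\{\alpha\in\mathfrak{P}\colon h^*_{\mu,S}(\alpha)=0\}$ is closed in $(\mathfrak{P},\rho)$.
   Context: $(X,\mathcal{B},\mu)$ is a standard probability space and the discrete group $G$ acts measurably and preserves $\mu$. $\mathfrak{P}$ is the set of finite measurable partitions of $X$ (identified mod $0$); $g^{-1}\alpha=\{g^{-1}A\colon A\in\alpha\}$. $H_\mu(\alpha)=-\sum_{A\in\alpha}\mu(A)\log\mu(A)$, $H_\mu(\alpha|\beta)=\sum_{B\in\beta}\mu(B)\sum_{A\in\alpha}-\mu(A|B)\log\mu(A|B)$ with $\mu(A|B)=\mu(A\cap B)/\mu(B)$ ($0$ if $\mu(B)=0$); $\rho(\alpha,\beta)=H_\mu(\alpha|\beta)+H_\mu(\beta|\alpha)$. $h^*_{\mu,S}(\alpha)=\limsup_n\frac1n\sup_{\alpha_1,\dots,\alpha_n\in\{g^{-1}\alpha\colon g\in S\}}H_\mu(\bigvee_{i=1}^n\alpha_i)$. *)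

theory Defs
  imports "HOL-Probability.Probability" "HOL-Algebra.Group_Action"
begin

text \<open>Finite measurable partitions of the space of a measure M (exact partitions;
  null and empty cells are allowed, so "mod 0" identification is handled by the
  Rokhlin pseudometric, for which rho(alpha,beta)=0 iff alpha = beta mod 0).\<close>
definition fin_partitions :: "'a measure \<Rightarrow> 'a set set set" where
  "fin_partitions M = {\<alpha>. finite \<alpha> \<and> \<alpha> \<subseteq> sets M \<and> disjoint \<alpha> \<and> \<Union>\<alpha> = space M}"

definition pjoin :: "'a set set \<Rightarrow> 'a set set \<Rightarrow> 'a set set" where
  "pjoin \<alpha> \<beta> = {A \<inter> B | A B. A \<in> \<alpha> \<and> B \<in> \<beta>}"

definition pjoin_list :: "'a measure \<Rightarrow> 'a set set list \<Rightarrow> 'a set set" where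
  "pjoin_list M as = foldr pjoin as {space M}"

definition pull :: "'a measure \<Rightarrow> ('a \<Rightarrow> 'a) \<Rightarrow> 'a set set \<Rightarrow> 'a set set" where
  "pull M T \<alpha> = {T -` A \<inter> space M | A. A \<in> \<alpha>}"

definition pentropy :: "'a measure \<Rightarrow> 'a set set \<Rightarrow> real" where
  "pentropy M \<alpha> = (\<Sum>A\<in>\<alpha>. - (measure M A * ln (measure M A)))"

definition cond_meas :: "'a measure \<Rightarrow> 'a set \<Rightarrow> 'a set \<Rightarrow> real" where
  "cond_meas M A B = (if measure M B = 0 then 0 else measure M (A \<inter> B) / measure M B)"

definition cond_pentropy :: "'a measure \<Rightarrow> 'a set set \<Rightarrow> 'a set set \<Rightarrow> real" where
  "cond_pentropy M \<alpha> \<beta> =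
     (\<Sum>B\<in>\<beta>. measure M B * (\<Sum>A\<in>\<alpha>. - (cond_meas M A B * ln (cond_meas M A B))))"

definition rokhlin :: "'a measure \<Rightarrow> 'a set set \<Rightarrow> 'a set set \<Rightarrow> real" where
  "rokhlin M \<alpha> \<beta> = cond_pentropy M \<alpha> \<beta> + cond_pentropy M \<beta> \<alpha>"

text \<open>Valued in ereal so that the supremum is
  always defined (it is finite, in [0, n log |alpha|], whenever S is nonempty).\<close>
definition hstar :: "'a measure \<Rightarrow> ('g \<Rightarrow> 'a \<Rightarrow> 'a) \<Rightarrow> 'g set \<Rightarrow> 'a set set \<Rightarrow> ereal" where
  "hstar M act S \<alpha> = limsup (\<lambda>n::nat. ereal (1 / real n) *
      (SUP as \<in> {as. length as = n \<and> set as \<subseteq> (\<lambda>g. pull M (act g) \<alpha>) ` S}.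
          ereal (pentropy M (pjoin_list M as))))"

end

theory Submission
  imports Defs
begin

lemma logsum:
  fixes a b :: "'i \<Rightarrow> real"
  assumes fin: "finite I" and a0: "\<And>i. i\<in>I \<Longrightarrow> 0 \<le> a i" and ab: "\<And>i. i\<in>I \<Longrightarrow> a i \<le> b i"
  shows "(\<Sum>i\<in>I. a i) * ln ((\<Sum>i\<in>I. a i)/(\<Sum>i\<in>I. b i)) \<le> (\<Sum>i\<in>I. a i * ln (a i / b i))"
proof -
  define A where "A = (\<Sum>i\<in>I. a i)"
  define B where "B = (\<Sum>i\<in>I. b i)"
  have A0: "0 \<le> A" unfolding A_def using a0 by (simp add: sum_nonneg)
  have AB: "A \<le> B" unfolding A_def B_def using ab by (simp add: sum_mono)
  show ?thesis
  proof (cases "A = 0")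
    case True
    then have "\<forall>i\<in>I. a i = 0" using sum_nonneg_eq_0_iff[OF fin] a0 unfolding A_def by blast
    then show ?thesis using True by (simp add: A_def)
  next
    case False
    then have Ap: "A > 0" using A0 by simp
    then have Bp: "B > 0" using AB by simp
    have key: "a i * ln (A/B) \<le> a i * ln (a i / b i) + (b i * A / B - a i)" if i: "i \<in> I" for i
    proof (cases "a i = 0")
      case True
      then show ?thesis using ab[OF i] a0[OF i] Ap Bp by simp
    next
      case False
      then have ap: "a i > 0" using a0[OF i] by simp
      then have bp: "b i > 0" using ab[OF i] by simp
      define t where "t = b i * A / (a i * B)"
      have tp: "t > 0" unfolding t_def using ap bp Ap Bp by simp
      have "ln t \<le> t - 1" using ln_le_minus_one[OF tp] .
      moreover have "ln t = ln (A/B) - ln (a i / b i)"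
        unfolding t_def using ap bp Ap Bp by (simp add: ln_div ln_mult)
      ultimately have "a i * (ln (A/B) - ln (a i / b i)) \<le> a i * (t - 1)"
        using ap by (simp add: mult_left_mono)
      moreover have "a i * (t - 1) = b i * A / B - a i" unfolding t_def using ap Bp
        by (simp add: field_simps)
      ultimately show ?thesis by (simp add: algebra_simps)
    qed
    have "(\<Sum>i\<in>I. a i * ln (A/B)) \<le> (\<Sum>i\<in>I. a i * ln (a i / b i) + (b i * A / B - a i))"
      by (rule sum_mono) (use key in auto)
    also have "\<dots> = (\<Sum>i\<in>I. a i * ln (a i / b i)) + (B * A / B - A)"
      by (simp add: sum.distrib sum_subtractf A_def B_def sum_divide_distrib[symmetric] sum_distrib_right[symmetric])
    also have "\<dots> = (\<Sum>i\<in>I. a i * ln (a i / b i))" using Bp by simp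
    finally show ?thesis by (simp add: A_def B_def sum_distrib_right[symmetric])
  qed
qed

abbreviation phi :: "real \<Rightarrow> real" where "phi x \<equiv> - (x * ln x)"

lemma cond_alt: "cond_pentropy M \<alpha> \<beta> =
   (\<Sum>B\<in>\<beta>. \<Sum>A\<in>\<alpha>. - (measure M (A \<inter> B) * ln (measure M (A \<inter> B) / measure M B)))"
  unfolding cond_pentropy_def cond_meas_def sum_distrib_left
  by (intro sum.cong refl) auto

lemma pjoin_img: "pjoin \<alpha> \<beta> = (\<lambda>(A,B). A \<inter> B) ` (\<alpha> \<times> \<beta>)"
  unfolding pjoin_def by auto

lemma pull_img: "pull M T \<alpha> = (\<lambda>A. T -` A \<inter> space M) ` \<alpha>"
  unfolding pull_def by auto

lemma pjoin_comm: "pjoin \<alpha> \<beta> = pjoin \<beta> \<alpha>"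
  unfolding pjoin_def by (auto simp: Int_commute)

lemma pjoin_assoc: "pjoin (pjoin \<alpha> \<beta>) \<gamma> = pjoin \<alpha> (pjoin \<beta> \<gamma>)"
proof
  show "pjoin (pjoin \<alpha> \<beta>) \<gamma> \<subseteq> pjoin \<alpha> (pjoin \<beta> \<gamma>)"
  proof
    fix x assume "x \<in> pjoin (pjoin \<alpha> \<beta>) \<gamma>"
    then obtain A B C where "A \<in> \<alpha>" "B \<in> \<beta>" "C \<in> \<gamma>" "x = A \<inter> B \<inter> C" unfolding pjoin_def by blast
    then show "x \<in> pjoin \<alpha> (pjoin \<beta> \<gamma>)" unfolding pjoin_def by (auto simp: Int_assoc)
  qed
  show "pjoin \<alpha> (pjoin \<beta> \<gamma>) \<subseteq> pjoin (pjoin \<alpha> \<beta>) \<gamma>"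
  proof
    fix x assume "x \<in> pjoin \<alpha> (pjoin \<beta> \<gamma>)"
    then obtain A B C where "A \<in> \<alpha>" "B \<in> \<beta>" "C \<in> \<gamma>" "x = A \<inter> (B \<inter> C)" unfolding pjoin_def by blast
    then show "x \<in> pjoin (pjoin \<alpha> \<beta>) \<gamma>" unfolding pjoin_def by (auto simp: Int_assoc[symmetric])
  qed
qed

lemma pjoin_list_Cons: "pjoin_list M (a # as) = pjoin a (pjoin_list M as)"
  unfolding pjoin_list_def by simp

lemma fin_partitionsD:
  assumes "\<alpha> \<in> fin_partitions M"
  shows "finite \<alpha>" "\<alpha> \<subseteq> sets M" "disjoint \<alpha>" "\<Union>\<alpha> = space M"
  using assms unfolding fin_partitions_def by auto

lemma sum_pjoin:
  assumes "\<alpha> \<in> fin_partitions M" "\<beta> \<in> fin_partitions M" "f {} = 0"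
  shows "(\<Sum>D\<in>pjoin \<alpha> \<beta>. f D) = (\<Sum>A\<in>\<alpha>. \<Sum>B\<in>\<beta>. f (A \<inter> B))"
proof -
  note a = fin_partitionsD[OF assms(1)] and b = fin_partitionsD[OF assms(2)]
  have "(\<Sum>D\<in>pjoin \<alpha> \<beta>. f D) = (\<Sum>p\<in>\<alpha> \<times> \<beta>. f (fst p \<inter> snd p))"
    unfolding pjoin_img
  proof (subst sum.reindex_nontrivial)
    show "finite (\<alpha> \<times> \<beta>)" using a b by simp
    fix x y assume xy: "x \<in> \<alpha> \<times> \<beta>" "y \<in> \<alpha> \<times> \<beta>" "x \<noteq> y"
      "(case x of (A, B) \<Rightarrow> A \<inter> B) = (case y of (A, B) \<Rightarrow> A \<inter> B)"
    obtain A B A' B' where x: "x = (A,B)" and y: "y = (A',B')" by fastforce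
    have "A \<inter> B = {}"
    proof (cases "A = A'")
      case True
      then have "B \<noteq> B'" using xy x y by auto
      then have "B \<inter> B' = {}" using b(3) xy x y by (auto dest: disjointD)
      then show ?thesis using xy x y by auto
    next
      case False
      then have "A \<inter> A' = {}" using a(3) xy x y by (auto dest: disjointD)
      then show ?thesis using xy x y by auto
    qed
    then show "f (case x of (A, B) \<Rightarrow> A \<inter> B) = 0" using x assms(3) by simp
  qed (simp add: comp_def case_prod_unfold)
  also have "\<dots> = (\<Sum>A\<in>\<alpha>. \<Sum>B\<in>\<beta>. f (A \<inter> B))"
    by (simp add: sum.cartesian_product case_prod_unfold)
  finally show ?thesis .
qed

lemma sum_pull:
  assumes "\<alpha> \<in> fin_partitions M" "f {} = 0"
  shows "(\<Sum>D\<in>pull M T \<alpha>. f D) = (\<Sum>A\<in>\<alpha>. f (T -` A \<inter> space M))"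
  unfolding pull_img
proof (subst sum.reindex_nontrivial)
  note a = fin_partitionsD[OF assms(1)]
  show "finite \<alpha>" using a by simp
  fix x y assume xy: "x \<in> \<alpha>" "y \<in> \<alpha>" "x \<noteq> y" "T -` x \<inter> space M = T -` y \<inter> space M"
  then have "x \<inter> y = {}" using a(3) by (auto dest: disjointD)
  then have "T -` x \<inter> space M = {}" using xy(4) by blast
  then show "f (T -` x \<inter> space M) = 0" using assms(2) by simp
qed (simp add: comp_def)

lemma pjoin_pull: "pjoin (pull M T \<alpha>) (pull M T \<beta>) = pull M T (pjoin \<alpha> \<beta>)"
proof
  show "pjoin (pull M T \<alpha>) (pull M T \<beta>) \<subseteq> pull M T (pjoin \<alpha> \<beta>)"
  proof
    fix x assume "x \<in> pjoin (pull M T \<alpha>) (pull M T \<beta>)"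
    then obtain A B where "A \<in> \<alpha>" "B \<in> \<beta>" "x = (T -` A \<inter> space M) \<inter> (T -` B \<inter> space M)"
      unfolding pjoin_def pull_def by blast
    moreover have "x = T -` (A \<inter> B) \<inter> space M" using calculation by auto
    ultimately show "x \<in> pull M T (pjoin \<alpha> \<beta>)" unfolding pjoin_def pull_def by blast
  qed
  show "pull M T (pjoin \<alpha> \<beta>) \<subseteq> pjoin (pull M T \<alpha>) (pull M T \<beta>)"
  proof
    fix x assume "x \<in> pull M T (pjoin \<alpha> \<beta>)"
    then obtain A B where "A \<in> \<alpha>" "B \<in> \<beta>" "x = T -` (A \<inter> B) \<inter> space M"
      unfolding pjoin_def pull_def by blast
    moreover have "x = (T -` A \<inter> space M) \<inter> (T -` B \<inter> space M)" using calculation by auto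
    ultimately show "x \<in> pjoin (pull M T \<alpha>) (pull M T \<beta>)" unfolding pjoin_def pull_def by blast
  qed
qed

context prob_space
begin

lemma pjoin_part:
  assumes "\<alpha> \<in> fin_partitions M" "\<beta> \<in> fin_partitions M"
  shows "pjoin \<alpha> \<beta> \<in> fin_partitions M"
proof -
  note a = fin_partitionsD[OF assms(1)] and b = fin_partitionsD[OF assms(2)]
  have "finite (pjoin \<alpha> \<beta>)" unfolding pjoin_img using a b by simp
  moreover have "pjoin \<alpha> \<beta> \<subseteq> sets M" unfolding pjoin_def using a b by auto
  moreover have "disjoint (pjoin \<alpha> \<beta>)"
  proof (rule disjointI)
    fix x y assume xy: "x \<in> pjoin \<alpha> \<beta>" "y \<in> pjoin \<alpha> \<beta>" "x \<noteq> y"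
    obtain A B where AB: "A \<in> \<alpha>" "B \<in> \<beta>" "x = A \<inter> B" using xy(1) unfolding pjoin_def by blast
    obtain A' B' where AB': "A' \<in> \<alpha>" "B' \<in> \<beta>" "y = A' \<inter> B'" using xy(2) unfolding pjoin_def by blast
    show "x \<inter> y = {}"
    proof (cases "A = A'")
      case True
      then have "B \<noteq> B'" using xy AB AB' by auto
      then have "B \<inter> B' = {}" using b(3) AB AB' by (auto dest: disjointD)
      then show ?thesis using AB AB' by auto
    next
      case False
      then have "A \<inter> A' = {}" using a(3) AB AB' by (auto dest: disjointD)
      then show ?thesis using AB AB' by auto
    qed
  qed
  moreover have "\<Union>(pjoin \<alpha> \<beta>) = space M"
  proof
    show "\<Union>(pjoin \<alpha> \<beta>) \<subseteq> space M" unfolding pjoin_def using a by auto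
    show "space M \<subseteq> \<Union>(pjoin \<alpha> \<beta>)"
    proof
      fix x assume "x \<in> space M"
      then obtain A B where "A \<in> \<alpha>" "B \<in> \<beta>" "x \<in> A" "x \<in> B" using a(4) b(4) by blast
      then show "x \<in> \<Union>(pjoin \<alpha> \<beta>)" unfolding pjoin_def by blast
    qed
  qed
  ultimately show ?thesis unfolding fin_partitions_def by blast
qed

lemma triv_part: "{space M} \<in> fin_partitions M"
  unfolding fin_partitions_def by auto

lemma pjoin_list_part:
  assumes "set as \<subseteq> fin_partitions M"
  shows "pjoin_list M as \<in> fin_partitions M"
  using assms by (induction as) (auto simp: pjoin_list_def triv_part intro: pjoin_part)

lemma pull_part:
  assumes "\<alpha> \<in> fin_partitions M" "T \<in> measurable M M"
  shows "pull M T \<alpha> \<in> fin_partitions M"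
proof -
  note a = fin_partitionsD[OF assms(1)]
  have "finite (pull M T \<alpha>)" unfolding pull_img using a by simp
  moreover have "pull M T \<alpha> \<subseteq> sets M" unfolding pull_def using a assms(2)
    by (auto intro: measurable_sets)
  moreover have "disjoint (pull M T \<alpha>)"
  proof (rule disjointI)
    fix x y assume "x \<in> pull M T \<alpha>" "y \<in> pull M T \<alpha>" "x \<noteq> y"
    then obtain A A' where "A \<in> \<alpha>" "A' \<in> \<alpha>" "x = T -` A \<inter> space M" "y = T -` A' \<inter> space M" "A \<noteq> A'"
      unfolding pull_def by auto
    then show "x \<inter> y = {}" using a(3) by (auto dest: disjointD)
  qed
  moreover have "\<Union>(pull M T \<alpha>) = space M"
  proof
    show "\<Union>(pull M T \<alpha>) \<subseteq> space M" unfolding pull_def by auto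
    show "space M \<subseteq> \<Union>(pull M T \<alpha>)"
    proof
      fix x assume x: "x \<in> space M"
      then have "T x \<in> space M" using assms(2) by (auto dest: measurable_space)
      then obtain A where "A \<in> \<alpha>" "T x \<in> A" using a(4) by blast
      then show "x \<in> \<Union>(pull M T \<alpha>)" unfolding pull_def using x by blast
    qed
  qed
  ultimately show ?thesis unfolding fin_partitions_def by blast
qed

lemma sum_cells:
  assumes "\<alpha> \<in> fin_partitions M" "B \<in> sets M"
  shows "(\<Sum>A\<in>\<alpha>. measure M (A \<inter> B)) = measure M B"
proof -
  note a = fin_partitionsD[OF assms(1)]
  have "measure M (\<Union>A\<in>\<alpha>. A \<inter> B) = (\<Sum>A\<in>\<alpha>. measure M (A \<inter> B))"
  proof (rule measure_finite_Union)
    show "finite \<alpha>" by (rule a(1))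
    show "(\<lambda>A. A \<inter> B) ` \<alpha> \<subseteq> sets M" using a(2) assms(2) by auto
    show "disjoint_family_on (\<lambda>A. A \<inter> B) \<alpha>" unfolding disjoint_family_on_def
      using a(3) by (auto dest: disjointD)
  qed (simp add: emeasure_eq_measure)
  moreover have "(\<Union>A\<in>\<alpha>. A \<inter> B) = B" using a(4) sets.sets_into_space[OF assms(2)] by blast
  ultimately show ?thesis by simp
qed


lemma meas_le: "B \<in> sets M \<Longrightarrow> measure M (A \<inter> B) \<le> measure M B"
  by (rule finite_measure_mono) auto

lemma psi_split:
  fixes x y :: real
  assumes "0 \<le> x" "x \<le> y"
  shows "- (x * ln (x / y)) = phi x + x * ln y"
proof (cases "x = 0")
  case False
  then have "x > 0" "y > 0" using assms by auto
  then show ?thesis by (simp add: ln_div algebra_simps)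
qed simp

lemma chain:
  assumes a: "\<alpha> \<in> fin_partitions M" and b: "\<beta> \<in> fin_partitions M"
  shows "cond_pentropy M \<alpha> \<beta> = pentropy M (pjoin \<alpha> \<beta>) - pentropy M \<beta>"
proof -
  note A = fin_partitionsD[OF a] and B = fin_partitionsD[OF b]
  have "cond_pentropy M \<alpha> \<beta> =
     (\<Sum>B\<in>\<beta>. \<Sum>A\<in>\<alpha>. phi (measure M (A \<inter> B)) + measure M (A \<inter> B) * ln (measure M B))"
    unfolding cond_alt
  proof (intro sum.cong refl)
    fix B A assume "B \<in> \<beta>" "A \<in> \<alpha>"
    then have "B \<in> sets M" using B by auto
    then show "- (measure M (A \<inter> B) * ln (measure M (A \<inter> B) / measure M B)) =
          phi (measure M (A \<inter> B)) + measure M (A \<inter> B) * ln (measure M B)"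
      by (intro psi_split meas_le) auto
  qed
  also have "\<dots> = (\<Sum>B\<in>\<beta>. (\<Sum>A\<in>\<alpha>. phi (measure M (A \<inter> B))) - phi (measure M B))"
  proof (intro sum.cong refl)
    fix B assume "B \<in> \<beta>"
    then have "B \<in> sets M" using B by auto
    then have h: "(\<Sum>A\<in>\<alpha>. measure M (A \<inter> B) * ln (measure M B)) = measure M B * ln (measure M B)"
      using sum_cells[OF a] by (simp add: sum_distrib_right[symmetric])
    then show "(\<Sum>A\<in>\<alpha>. phi (measure M (A \<inter> B)) + measure M (A \<inter> B) * ln (measure M B)) =
         (\<Sum>A\<in>\<alpha>. phi (measure M (A \<inter> B))) - phi (measure M B)"
      unfolding sum.distrib h by simp
  qed
  also have "\<dots> = (\<Sum>A\<in>\<alpha>. \<Sum>B\<in>\<beta>. phi (measure M (A \<inter> B))) - pentropy M \<beta>"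
    unfolding pentropy_def by (subst sum_subtractf, subst sum.swap, rule refl)
  also have "(\<Sum>A\<in>\<alpha>. \<Sum>B\<in>\<beta>. phi (measure M (A \<inter> B))) = pentropy M (pjoin \<alpha> \<beta>)"
    unfolding pentropy_def by (rule sum_pjoin[OF a b, symmetric]) simp
  finally show ?thesis .
qed

lemma pentropy_nonneg:
  assumes a: "\<alpha> \<in> fin_partitions M"
  shows "0 \<le> pentropy M \<alpha>"
  unfolding pentropy_def
proof (rule sum_nonneg)
  fix A assume "A \<in> \<alpha>"
  have "measure M A \<le> 1" by simp
  moreover have "0 \<le> measure M A" by simp
  moreover have "ln (measure M A) \<le> 0" if "measure M A > 0"
    using ln_le_minus_one[OF that] \<open>measure M A \<le> 1\<close> by linarith
  ultimately have "ln (measure M A) \<le> 0 \<or> measure M A = 0" by linarith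
  then show "0 \<le> phi (measure M A)"
    using \<open>0 \<le> measure M A\<close> by (auto simp: mult_nonneg_nonpos)
qed

lemma cond_nonneg:
  assumes a: "\<alpha> \<in> fin_partitions M" and b: "\<beta> \<in> fin_partitions M"
  shows "0 \<le> cond_pentropy M \<alpha> \<beta>"
  unfolding cond_alt
proof (intro sum_nonneg)
  fix B A assume "B \<in> \<beta>" "A \<in> \<alpha>"
  then have Bs: "B \<in> sets M" using fin_partitionsD[OF b] by auto
  define x where "x = measure M (A \<inter> B)"
  define y where "y = measure M B"
  have x0: "0 \<le> x" and xy: "x \<le> y" unfolding x_def y_def using meas_le[OF Bs] by auto
  have "x * ln (x / y) \<le> 0"
  proof (cases "x = 0")
    case False
    then have "x > 0" "y > 0" using x0 xy by auto
    then have "ln (x / y) \<le> 0" using xy by simp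
    then show ?thesis using x0 by (simp add: mult_nonneg_nonpos)
  qed simp
  then show "0 \<le> - (measure M (A \<inter> B) * ln (measure M (A \<inter> B) / measure M B))"
    unfolding x_def y_def by simp
qed

lemma jensen:
  assumes a: "\<alpha> \<in> fin_partitions M" and b: "\<beta> \<in> fin_partitions M" and c: "\<gamma> \<in> fin_partitions M"
  shows "cond_pentropy M \<alpha> (pjoin \<beta> \<gamma>) \<le> cond_pentropy M \<alpha> \<beta>"
proof -
  note A = fin_partitionsD[OF a] and B = fin_partitionsD[OF b] and C = fin_partitionsD[OF c]
  have "cond_pentropy M \<alpha> (pjoin \<beta> \<gamma>) = (\<Sum>B\<in>\<beta>. \<Sum>C\<in>\<gamma>. \<Sum>A\<in>\<alpha>.
        - (measure M (A \<inter> (B \<inter> C)) * ln (measure M (A \<inter> (B \<inter> C)) / measure M (B \<inter> C))))"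
    unfolding cond_alt by (rule sum_pjoin[OF b c]) simp
  also have "\<dots> = (\<Sum>B\<in>\<beta>. \<Sum>A\<in>\<alpha>. \<Sum>C\<in>\<gamma>.
        - (measure M (A \<inter> (B \<inter> C)) * ln (measure M (A \<inter> (B \<inter> C)) / measure M (B \<inter> C))))"
    by (rule sum.cong[OF refl], rule sum.swap)
  also have "\<dots> \<le> (\<Sum>B\<in>\<beta>. \<Sum>A\<in>\<alpha>. - (measure M (A \<inter> B) * ln (measure M (A \<inter> B) / measure M B)))"
  proof (intro sum_mono)
    fix B A assume BA: "B \<in> \<beta>" "A \<in> \<alpha>"
    then have Bs: "B \<in> sets M" and As: "A \<in> sets M" using A B by auto
    have s1: "(\<Sum>C\<in>\<gamma>. measure M (A \<inter> (B \<inter> C))) = measure M (A \<inter> B)"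
      using sum_cells[OF c, of "A \<inter> B"] As Bs by (simp add: Int_ac)
    have s2: "(\<Sum>C\<in>\<gamma>. measure M (B \<inter> C)) = measure M B"
      using sum_cells[OF c Bs] by (simp add: Int_ac)
    have "(\<Sum>C\<in>\<gamma>. measure M (A \<inter> (B \<inter> C))) * ln ((\<Sum>C\<in>\<gamma>. measure M (A \<inter> (B \<inter> C))) / (\<Sum>C\<in>\<gamma>. measure M (B \<inter> C)))
       \<le> (\<Sum>C\<in>\<gamma>. measure M (A \<inter> (B \<inter> C)) * ln (measure M (A \<inter> (B \<inter> C)) / measure M (B \<inter> C)))"
    proof (rule logsum)
      show "finite \<gamma>" by (rule C(1))
      fix C assume "C \<in> \<gamma>"
      then have "C \<in> sets M" using C by auto
      then show "measure M (A \<inter> (B \<inter> C)) \<le> measure M (B \<inter> C)" using Bs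
        by (intro meas_le) auto
    qed simp
    then show "(\<Sum>C\<in>\<gamma>. - (measure M (A \<inter> (B \<inter> C)) * ln (measure M (A \<inter> (B \<inter> C)) / measure M (B \<inter> C))))
          \<le> - (measure M (A \<inter> B) * ln (measure M (A \<inter> B) / measure M B))"
      unfolding s1 s2 by (simp add: sum_negf)
  qed
  also have "\<dots> = cond_pentropy M \<alpha> \<beta>" unfolding cond_alt ..
  finally show ?thesis .
qed

lemma pull_entropy:
  assumes a: "\<alpha> \<in> fin_partitions M" and T: "T \<in> measurable M M" "distr M M T = M"
  shows "pentropy M (pull M T \<alpha>) = pentropy M \<alpha>"
  unfolding pentropy_def
proof (subst sum_pull[OF a])
  show "(\<Sum>A\<in>\<alpha>. phi (measure M (T -` A \<inter> space M))) = (\<Sum>A\<in>\<alpha>. phi (measure M A))"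
  proof (intro sum.cong refl)
    fix A assume "A \<in> \<alpha>"
    then have "A \<in> sets M" using fin_partitionsD[OF a] by auto
    then have "measure (distr M M T) A = measure M (T -` A \<inter> space M)"
      by (rule measure_distr[OF T(1)])
    then show "phi (measure M (T -` A \<inter> space M)) = phi (measure M A)" using T(2) by simp
  qed
qed simp

lemma pull_cond:
  assumes a: "\<alpha> \<in> fin_partitions M" and b: "\<beta> \<in> fin_partitions M"
    and T: "T \<in> measurable M M" "distr M M T = M"
  shows "cond_pentropy M (pull M T \<alpha>) (pull M T \<beta>) = cond_pentropy M \<alpha> \<beta>"
  using chain[OF pull_part[OF a T(1)] pull_part[OF b T(1)]] chain[OF a b]
    pull_entropy[OF pjoin_part[OF a b] T] pull_entropy[OF b T]
  by (simp add: pjoin_pull)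


lemma pjoin_triv:
  assumes a: "\<alpha> \<in> fin_partitions M"
  shows "pjoin \<alpha> {space M} = \<alpha>"
proof -
  note A = fin_partitionsD[OF a]
  have "\<And>X. X \<in> \<alpha> \<Longrightarrow> X \<inter> space M = X" using A(4) by blast
  then show ?thesis unfolding pjoin_def by force
qed

lemma pentropy_triv: "pentropy M {space M} = 0"
  unfolding pentropy_def by (simp add: prob_space)

lemma cond_triv:
  assumes a: "\<alpha> \<in> fin_partitions M"
  shows "cond_pentropy M \<alpha> {space M} = pentropy M \<alpha>"
  using chain[OF a triv_part] pjoin_triv[OF a] pentropy_triv by simp

lemma pull_triv:
  assumes T: "T \<in> measurable M M"
  shows "pull M T {space M} = {space M}"
proof -
  have "T -` space M \<inter> space M = space M" using T by (auto dest: measurable_space)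
  then show ?thesis unfolding pull_def by auto
qed

lemma subadd:
  assumes a: "a \<in> fin_partitions M" and A: "A \<in> fin_partitions M" and C: "C \<in> fin_partitions M"
  shows "cond_pentropy M (pjoin a A) C \<le> cond_pentropy M a C + cond_pentropy M A C"
proof -
  have e: "pjoin (pjoin a A) C = pjoin A (pjoin a C)"
    by (metis pjoin_assoc pjoin_comm)
  have "cond_pentropy M (pjoin a A) C = cond_pentropy M a C + cond_pentropy M A (pjoin a C)"
    using chain[OF pjoin_part[OF a A] C] chain[OF a C] chain[OF A pjoin_part[OF a C]] e by simp
  also have "cond_pentropy M A (pjoin a C) \<le> cond_pentropy M A C"
    using jensen[OF A C a] pjoin_comm[of a C] by simp
  finally show ?thesis by simp
qed

lemma cond2:
  assumes a: "a \<in> fin_partitions M" and A: "A \<in> fin_partitions M"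
    and b: "b \<in> fin_partitions M" and B: "B \<in> fin_partitions M"
  shows "cond_pentropy M (pjoin a A) (pjoin b B) \<le> cond_pentropy M a b + cond_pentropy M A B"
proof -
  have "cond_pentropy M (pjoin a A) (pjoin b B) \<le> cond_pentropy M a (pjoin b B) + cond_pentropy M A (pjoin b B)"
    by (rule subadd[OF a A pjoin_part[OF b B]])
  moreover have "cond_pentropy M a (pjoin b B) \<le> cond_pentropy M a b" by (rule jensen[OF a b B])
  moreover have "cond_pentropy M A (pjoin b B) \<le> cond_pentropy M A B"
    using jensen[OF A B b] pjoin_comm[of b B] by simp
  ultimately show ?thesis by simp
qed

lemma join_bound:
  assumes a: "\<alpha> \<in> fin_partitions M" and b: "\<beta> \<in> fin_partitions M"
    and Ts: "\<And>T. T \<in> set Ts \<Longrightarrow> T \<in> measurable M M \<and> distr M M T = M"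
  shows "cond_pentropy M (pjoin_list M (map (\<lambda>T. pull M T \<alpha>) Ts)) (pjoin_list M (map (\<lambda>T. pull M T \<beta>) Ts))
     \<le> real (length Ts) * cond_pentropy M \<alpha> \<beta>
   \<and> pjoin_list M (map (\<lambda>T. pull M T \<alpha>) Ts) \<in> fin_partitions M
   \<and> pjoin_list M (map (\<lambda>T. pull M T \<beta>) Ts) \<in> fin_partitions M"
  using Ts
proof (induction Ts)
  case Nil
  then show ?case using cond_triv[OF triv_part] pentropy_triv triv_part by (simp add: pjoin_list_def)
next
  case (Cons T Ts)
  then have T: "T \<in> measurable M M" "distr M M T = M" by auto
  from Cons have IH: "cond_pentropy M (pjoin_list M (map (\<lambda>T. pull M T \<alpha>) Ts)) (pjoin_list M (map (\<lambda>T. pull M T \<beta>) Ts))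
     \<le> real (length Ts) * cond_pentropy M \<alpha> \<beta>"
    "pjoin_list M (map (\<lambda>T. pull M T \<alpha>) Ts) \<in> fin_partitions M"
    "pjoin_list M (map (\<lambda>T. pull M T \<beta>) Ts) \<in> fin_partitions M" by auto
  have "cond_pentropy M (pjoin (pull M T \<alpha>) (pjoin_list M (map (\<lambda>T. pull M T \<alpha>) Ts)))
          (pjoin (pull M T \<beta>) (pjoin_list M (map (\<lambda>T. pull M T \<beta>) Ts)))
     \<le> cond_pentropy M (pull M T \<alpha>) (pull M T \<beta>) + real (length Ts) * cond_pentropy M \<alpha> \<beta>"
    using cond2[OF pull_part[OF a T(1)] IH(2) pull_part[OF b T(1)] IH(3)] IH(1) by simp
  then show ?case using pull_cond[OF a b T] pjoin_part[OF pull_part[OF a T(1)] IH(2)]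
      pjoin_part[OF pull_part[OF b T(1)] IH(3)]
    by (simp add: pjoin_list_Cons algebra_simps)
qed

lemma ent_le:
  assumes X: "X \<in> fin_partitions M" and Y: "Y \<in> fin_partitions M"
  shows "pentropy M X \<le> pentropy M Y + cond_pentropy M X Y"
  using chain[OF X Y] chain[OF Y X] cond_nonneg[OF Y X] pjoin_comm[of X Y] by simp

lemma ent_list:
  assumes a: "\<alpha> \<in> fin_partitions M" and b: "\<beta> \<in> fin_partitions M"
    and Ts: "\<And>T. T \<in> set Ts \<Longrightarrow> T \<in> measurable M M \<and> distr M M T = M"
  shows "pentropy M (pjoin_list M (map (\<lambda>T. pull M T \<alpha>) Ts))
     \<le> pentropy M (pjoin_list M (map (\<lambda>T. pull M T \<beta>) Ts)) + real (length Ts) * cond_pentropy M \<alpha> \<beta>"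
  using join_bound[OF a b Ts] ent_le by fastforce

end

lemma list_choice: "set as \<subseteq> f ` S \<Longrightarrow> \<exists>gs. set gs \<subseteq> S \<and> as = map f gs"
proof (induction as)
  case Nil
  then show ?case by simp
next
  case (Cons a as)
  then obtain gs where "set gs \<subseteq> S" "as = map f gs" by auto
  moreover obtain g where "g \<in> S" "a = f g" using Cons.prems by auto
  ultimately show ?case by (intro exI[of _ "g # gs"]) auto
qed

lemma join_triv_list:
  "set as \<subseteq> {{space M}} \<Longrightarrow> pjoin_list M as = {space M}"
  by (induction as) (auto simp: pjoin_list_def pjoin_def)

definition Lset :: "'a measure \<Rightarrow> ('g \<Rightarrow> 'a \<Rightarrow> 'a) \<Rightarrow> 'g set \<Rightarrow> 'a set set \<Rightarrow> nat \<Rightarrow> 'a set set list set" where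
  "Lset M act S \<alpha> n = {as. length as = n \<and> set as \<subseteq> (\<lambda>g. pull M (act g) \<alpha>) ` S}"

definition SupH :: "'a measure \<Rightarrow> ('g \<Rightarrow> 'a \<Rightarrow> 'a) \<Rightarrow> 'g set \<Rightarrow> 'a set set \<Rightarrow> nat \<Rightarrow> ereal" where
  "SupH M act S \<alpha> n = (SUP as \<in> Lset M act S \<alpha> n. ereal (pentropy M (pjoin_list M as)))"

lemma hstar_SupH: "hstar M act S \<alpha> = limsup (\<lambda>n. ereal (1 / real n) * SupH M act S \<alpha> n)"
  unfolding hstar_def SupH_def Lset_def ..

lemma hstar_empty: "hstar M act {} \<alpha> = hstar M act {} \<beta>"
  unfolding hstar_def by simp

context prob_space
begin

lemma sup_cmp:
  assumes a: "\<alpha> \<in> fin_partitions M" and b: "\<beta> \<in> fin_partitions M"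
    and mp: "\<forall>g\<in>S. act g \<in> measurable M M \<and> distr M M (act g) = M"
  shows "SupH M act S \<alpha> n \<le> SupH M act S \<beta> n + ereal (real n * cond_pentropy M \<alpha> \<beta>)"
  unfolding SupH_def
proof (rule SUP_least)
  fix as assume "as \<in> Lset M act S \<alpha> n"
  then have len: "length as = n" and st: "set as \<subseteq> (\<lambda>g. pull M (act g) \<alpha>) ` S" unfolding Lset_def by auto
  obtain gs where gs: "set gs \<subseteq> S" "as = map (\<lambda>g. pull M (act g) \<alpha>) gs"
    using list_choice[OF st] by blast
  define bs where "bs = map (\<lambda>g. pull M (act g) \<beta>) gs"
  have bsL: "bs \<in> Lset M act S \<beta> n" unfolding Lset_def bs_def using gs len by auto
  have Ts: "\<And>T. T \<in> set (map act gs) \<Longrightarrow> T \<in> measurable M M \<and> distr M M T = M" using gs mp by auto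
  have "pentropy M (pjoin_list M as) \<le> pentropy M (pjoin_list M bs) + real n * cond_pentropy M \<alpha> \<beta>"
    using ent_list[OF a b, where Ts="map act gs", OF Ts] gs len unfolding bs_def by (simp add: comp_def)
  then have "ereal (pentropy M (pjoin_list M as)) \<le> ereal (pentropy M (pjoin_list M bs)) + ereal (real n * cond_pentropy M \<alpha> \<beta>)"
    by simp
  also have "\<dots> \<le> (SUP as \<in> Lset M act S \<beta> n. ereal (pentropy M (pjoin_list M as))) + ereal (real n * cond_pentropy M \<alpha> \<beta>)"
    by (intro add_right_mono SUP_upper bsL)
  finally show "ereal (pentropy M (pjoin_list M as)) \<le> (SUP as \<in> Lset M act S \<beta> n. ereal (pentropy M (pjoin_list M as))) + ereal (real n * cond_pentropy M \<alpha> \<beta>)" .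
qed

lemma sup_bounds:
  assumes a: "\<alpha> \<in> fin_partitions M" and S: "S \<noteq> {}"
    and mp: "\<forall>g\<in>S. act g \<in> measurable M M \<and> distr M M (act g) = M"
  shows "0 \<le> SupH M act S \<alpha> n \<and> SupH M act S \<alpha> n \<le> ereal (real n * pentropy M \<alpha>)"
proof
  obtain g where g: "g \<in> S" using S by auto
  have "replicate n (pull M (act g) \<alpha>) \<in> Lset M act S \<alpha> n" unfolding Lset_def using g by auto
  moreover have "pull M (act g) \<alpha> \<in> fin_partitions M" using pull_part[OF a] mp g by blast
  then have "pjoin_list M (replicate n (pull M (act g) \<alpha>)) \<in> fin_partitions M"
    by (intro pjoin_list_part) auto
  ultimately show "0 \<le> SupH M act S \<alpha> n" unfolding SupH_def
    by (meson SUP_upper2 ereal_less_eq(5) pentropy_nonneg)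
next
  have "SupH M act S {space M} n \<le> 0" unfolding SupH_def
  proof (rule SUP_least)
    fix as assume "as \<in> Lset M act S {space M} n"
    then have "set as \<subseteq> {{space M}}" unfolding Lset_def using pull_triv mp by auto
    then have "pjoin_list M as = {space M}" by (rule join_triv_list)
    then show "ereal (pentropy M (pjoin_list M as)) \<le> 0" using pentropy_triv by simp
  qed
  then show "SupH M act S \<alpha> n \<le> ereal (real n * pentropy M \<alpha>)"
    using sup_cmp[OF a triv_part mp] cond_triv[OF a]
    by (metis add_right_mono add.left_neutral order.trans)
qed

lemma limsup_shift:
  fixes f g :: "nat \<Rightarrow> real"
  assumes "\<And>n. f n \<le> g n + c"
  shows "limsup (\<lambda>n. ereal (f n)) \<le> limsup (\<lambda>n. ereal (g n)) + ereal c"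
proof -
  have "limsup (\<lambda>n. ereal (f n)) \<le> limsup (\<lambda>n. ereal (g n) + ereal c)"
    by (rule Limsup_mono) (use assms in auto)
  also have "\<dots> = limsup (\<lambda>n. ereal (g n)) + ereal c"
    by (rule Limsup_add_ereal_right) auto
  finally show ?thesis .
qed

lemma hstar_real:
  assumes a: "\<alpha> \<in> fin_partitions M" and S: "S \<noteq> {}"
    and mp: "\<forall>g\<in>S. act g \<in> measurable M M \<and> distr M M (act g) = M"
  shows "hstar M act S \<alpha> = limsup (\<lambda>n. ereal (real_of_ereal (SupH M act S \<alpha> n) / real n))"
    and "\<And>n. 0 \<le> real_of_ereal (SupH M act S \<alpha> n) / real n"
    and "\<And>n. real_of_ereal (SupH M act S \<alpha> n) / real n \<le> pentropy M \<alpha>"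
proof -
  have fin: "SupH M act S \<alpha> n = ereal (real_of_ereal (SupH M act S \<alpha> n))" for n
    using sup_bounds[OF a S mp, where n=n] by (cases "SupH M act S \<alpha> n") auto
  have bd: "0 \<le> real_of_ereal (SupH M act S \<alpha> n) \<and> real_of_ereal (SupH M act S \<alpha> n) \<le> real n * pentropy M \<alpha>" for n
    using sup_bounds[OF a S mp, where n=n] fin[of n] by (metis ereal_less_eq(3) ereal_less_eq(5))
  show "hstar M act S \<alpha> = limsup (\<lambda>n. ereal (real_of_ereal (SupH M act S \<alpha> n) / real n))"
    unfolding hstar_SupH by (subst fin) (simp add: divide_inverse mult.commute)
  fix n
  show "0 \<le> real_of_ereal (SupH M act S \<alpha> n) / real n" using bd[of n] by simp
  show "real_of_ereal (SupH M act S \<alpha> n) / real n \<le> pentropy M \<alpha>"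
  proof (cases "n = 0")
    case True then show ?thesis using pentropy_nonneg[OF a] by simp
  next
    case False then show ?thesis using bd[of n] by (simp add: divide_le_eq mult.commute)
  qed
qed

lemma hstar_cont:
  assumes a: "\<alpha> \<in> fin_partitions M" and b: "\<beta> \<in> fin_partitions M" and S: "S \<noteq> {}"
    and mp: "\<forall>g\<in>S. act g \<in> measurable M M \<and> distr M M (act g) = M"
  shows "\<exists>r s. hstar M act S \<alpha> = ereal r \<and> hstar M act S \<beta> = ereal s \<and> r \<le> s + cond_pentropy M \<alpha> \<beta>"
proof -
  define f where "f n = real_of_ereal (SupH M act S \<alpha> n) / real n" for n
  define g where "g n = real_of_ereal (SupH M act S \<beta> n) / real n" for n
  note ha = hstar_real[OF a S mp, folded f_def] and hb = hstar_real[OF b S mp, folded g_def]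
  have fg: "f n \<le> g n + cond_pentropy M \<alpha> \<beta>" for n
  proof (cases "n = 0")
    case True then show ?thesis using cond_nonneg[OF a b] by (simp add: f_def g_def)
  next
    case False
    have fa: "SupH M act S \<alpha> n = ereal (real_of_ereal (SupH M act S \<alpha> n))"
      using sup_bounds[OF a S mp, where n=n] by (cases "SupH M act S \<alpha> n") auto
    have fb: "SupH M act S \<beta> n = ereal (real_of_ereal (SupH M act S \<beta> n))"
      using sup_bounds[OF b S mp, where n=n] by (cases "SupH M act S \<beta> n") auto
    have "real_of_ereal (SupH M act S \<alpha> n) \<le> real_of_ereal (SupH M act S \<beta> n) + real n * cond_pentropy M \<alpha> \<beta>"
      using sup_cmp[OF a b mp, where n=n] fa fb by (metis ereal_less_eq(3) plus_ereal.simps(1))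
    then have "real_of_ereal (SupH M act S \<alpha> n) / real n \<le> (real_of_ereal (SupH M act S \<beta> n) + real n * cond_pentropy M \<alpha> \<beta>) / real n"
      by (rule divide_right_mono) simp
    also have "\<dots> = real_of_ereal (SupH M act S \<beta> n) / real n + cond_pentropy M \<alpha> \<beta>"
      using False by (simp add: field_simps)
    finally show ?thesis unfolding f_def g_def .
  qed
  have fin: "\<exists>r. limsup (\<lambda>n. ereal (h n)) = ereal r" if "\<And>n. 0 \<le> h n" "\<And>n. h n \<le> c" for h :: "nat \<Rightarrow> real" and c
  proof -
    have "0 \<le> limsup (\<lambda>n. ereal (h n))" by (rule le_Limsup) (use that in auto)
    moreover have "limsup (\<lambda>n. ereal (h n)) \<le> ereal c" by (rule Limsup_bounded) (use that in auto)
    ultimately show ?thesis by (cases "limsup (\<lambda>n. ereal (h n))") auto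
  qed
  obtain r where r: "limsup (\<lambda>n. ereal (f n)) = ereal r" using fin[of f] ha(2,3) by blast
  obtain s where s: "limsup (\<lambda>n. ereal (g n)) = ereal s" using fin[of g] hb(2,3) by blast
  have "limsup (\<lambda>n. ereal (f n)) \<le> limsup (\<lambda>n. ereal (g n)) + ereal (cond_pentropy M \<alpha> \<beta>)"
    by (rule limsup_shift) (rule fg)
  then have "ereal r \<le> ereal s + ereal (cond_pentropy M \<alpha> \<beta>)" using r s by simp
  then have "r \<le> s + cond_pentropy M \<alpha> \<beta>" by simp
  then show ?thesis using ha(1) hb(1) r s by auto
qed

end



theorem lemma4p4:
  fixes M :: "'a::polish_space measure"
    and G :: "('g, 'b) monoid_scheme"
    and act :: "'g \<Rightarrow> 'a \<Rightarrow> 'a"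
    and S :: "'g set"
  assumes "prob_space M"
    and "sets M = sets (borel :: 'a measure)"
    and "group G"
    and "group_action G (space M) act"
    and "\<And>g. g \<in> carrier G \<Longrightarrow> act g \<in> measurable M M"
    and "\<And>g. g \<in> carrier G \<Longrightarrow> distr M M (act g) = M"
    and "S \<subseteq> carrier G"
  shows "(\<forall>\<alpha> \<in> fin_partitions M. \<forall>\<beta> :: nat \<Rightarrow> 'a set set.
            (\<forall>n. \<beta> n \<in> fin_partitions M) \<and> (\<lambda>n. rokhlin M (\<beta> n) \<alpha>) \<longlonglongrightarrow> 0
            \<longrightarrow> (\<lambda>n. hstar M act S (\<beta> n)) \<longlonglongrightarrow> hstar M act S \<alpha>)
       \<and> (\<forall>\<alpha> \<in> fin_partitions M. \<forall>\<beta> :: nat \<Rightarrow> 'a set set.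
            (\<forall>n. \<beta> n \<in> fin_partitions M \<and> hstar M act S (\<beta> n) = 0)
            \<and> (\<lambda>n. rokhlin M (\<beta> n) \<alpha>) \<longlonglongrightarrow> 0
            \<longrightarrow> hstar M act S \<alpha> = 0)"
proof -
  interpret P: prob_space M by fact
  have mp: "\<forall>g\<in>S. act g \<in> measurable M M \<and> distr M M (act g) = M" using assms(5-7) by auto
  have part1: "(\<lambda>n. hstar M act S (\<beta> n)) \<longlonglongrightarrow> hstar M act S \<alpha>"
    if a: "\<alpha> \<in> fin_partitions M" and b: "\<forall>n. \<beta> n \<in> fin_partitions M"
      and lim: "(\<lambda>n. rokhlin M (\<beta> n) \<alpha>) \<longlonglongrightarrow> 0" for \<alpha> \<beta>
  proof (cases "S = {}")
    case True
    then have "\<And>n. hstar M act S (\<beta> n) = hstar M act S \<alpha>" using hstar_empty by metis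
    then show ?thesis by simp
  next
    case False
    obtain r where r: "hstar M act S \<alpha> = ereal r"
      using P.hstar_cont[OF a a False mp] by blast
    have "\<exists>s. hstar M act S (\<beta> n) = ereal s \<and> s \<le> r + rokhlin M (\<beta> n) \<alpha> \<and> r \<le> s + rokhlin M (\<beta> n) \<alpha>" for n
    proof -
      obtain s r1 where 1: "hstar M act S (\<beta> n) = ereal s" "hstar M act S \<alpha> = ereal r1"
          "s \<le> r1 + cond_pentropy M (\<beta> n) \<alpha>"
        using P.hstar_cont[OF b[rule_format, of n] a False mp] by blast
      obtain r2 s2 where 2: "hstar M act S \<alpha> = ereal r2" "hstar M act S (\<beta> n) = ereal s2"
          "r2 \<le> s2 + cond_pentropy M \<alpha> (\<beta> n)"
        using P.hstar_cont[OF a b[rule_format, of n] False mp] by blast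
      have "0 \<le> cond_pentropy M \<alpha> (\<beta> n)" "0 \<le> cond_pentropy M (\<beta> n) \<alpha>"
        using P.cond_nonneg a b by auto
      then show ?thesis using 1 2 r unfolding rokhlin_def by auto
    qed
    then obtain s where s: "\<And>n. hstar M act S (\<beta> n) = ereal (s n)"
      "\<And>n. s n \<le> r + rokhlin M (\<beta> n) \<alpha>" "\<And>n. r \<le> s n + rokhlin M (\<beta> n) \<alpha>"
      by metis
    have "s \<longlonglongrightarrow> r"
    proof (rule tendsto_sandwich[of "\<lambda>n. r - rokhlin M (\<beta> n) \<alpha>" _ _ "\<lambda>n. r + rokhlin M (\<beta> n) \<alpha>"])
      show "\<forall>\<^sub>F n in sequentially. r - rokhlin M (\<beta> n) \<alpha> \<le> s n" using s(3) by (auto simp: algebra_simps)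
      show "\<forall>\<^sub>F n in sequentially. s n \<le> r + rokhlin M (\<beta> n) \<alpha>" using s(2) by auto
      show "(\<lambda>n. r - rokhlin M (\<beta> n) \<alpha>) \<longlonglongrightarrow> r" using tendsto_diff[OF tendsto_const lim, of r] by simp
      show "(\<lambda>n. r + rokhlin M (\<beta> n) \<alpha>) \<longlonglongrightarrow> r" using tendsto_add[OF tendsto_const lim, of r] by simp
    qed
    then show ?thesis unfolding s(1) r by simp
  qed
  show ?thesis
  proof (intro conjI ballI allI impI)
    fix \<alpha> \<beta> assume "\<alpha> \<in> fin_partitions M" "(\<forall>n. \<beta> n \<in> fin_partitions M) \<and> (\<lambda>n. rokhlin M (\<beta> n) \<alpha>) \<longlonglongrightarrow> 0"
    then show "(\<lambda>n. hstar M act S (\<beta> n)) \<longlonglongrightarrow> hstar M act S \<alpha>" using part1 by blast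
  next
    fix \<alpha> \<beta> assume a: "\<alpha> \<in> fin_partitions M" and h: "(\<forall>n. \<beta> n \<in> fin_partitions M \<and> hstar M act S (\<beta> n) = 0)
            \<and> (\<lambda>n. rokhlin M (\<beta> n) \<alpha>) \<longlonglongrightarrow> 0"
    then have "(\<lambda>n. hstar M act S (\<beta> n)) \<longlonglongrightarrow> hstar M act S \<alpha>" using part1 by blast
    moreover have "(\<lambda>n. hstar M act S (\<beta> n)) = (\<lambda>n. 0)" using h by auto
    ultimately have "(\<lambda>n. 0 :: ereal) \<longlonglongrightarrow> hstar M act S \<alpha>" by simp
    then show "hstar M act S \<alpha> = 0" using LIMSEQ_unique[OF _ tendsto_const] by metis
  qed
qed

end
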